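(* Let $F\subseteq S$ be measurable. Then $P_S(F)\le \mathrm{Per}_s(F)$; more precisely, in $[0,+\infty]$, $$\mathrm{Per}_s(F)=P_S(F)+\sum_{k\in\mathbb Z\setminus\{0\}}\int_F\int_F\frac{dx\,dy}{|x-y+ke_1|^{n+s}}.$$ Moreover, setting $\widetilde F:=F\cap\{x_1\in[1/4,1/2]\}$, $\widehat F:=(F+e_1)\cap\{x_1\in[1/2,3/4]\}$ and $\Pi_S(F):=\int_{\widetilde F}\int_{\widehat F}\frac{dx\,dy}{|x-y|^{n+s}}$, there is a constant $C>0$ depending only on $n$ and $s$ such that $$\mathrm{Per}_s(F)\le P_S(F)+C\big(|F|^2+\Pi_S(F)\big).$$
   Context: Fix $n\ge 2$ and $s\in(0,1)$. Write $x=(x_1,x')\in\mathbb R\times\mathbb R^{n-1}$, $e_1=(1,0,\dots,0)$, and let $S:=[-1/2,1/2]\times\mathbb R^{n-1}$. Define the kernel $K(x):=\sum_{k\in\mathbb Z}|x+ke_1|^{-n-s}$, and for a measurable $E\subseteq\mathbb R^n$ set $P_S(E):=\int_{E\cap S}\int_{S\setminus E}K(x-y)\,dx\,dy$. The fractional perimeter is $\mathrm{Per}_s(F):=\int_F\int_{\mathbb R^n\setminus F}\frac{dx\,dy}{|x-y|^{n+s}}$. For $E\subseteq\mathbb R^n$, $v\in\mathbb R^n$, $E+v:=\{p+v:p\in E\}$. *)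

theory Defs
  imports "HOL-Analysis.Analysis"
begin

text \<open>Points of R^n are written x = (x_1, x') :: real \<times> 'm, so n = DIM(real \<times> 'm) = 1 + DIM('m) \<ge> 2.\<close>

definition e1 :: "real \<times> 'm::euclidean_space" where
  "e1 = (1, 0)"

definition strip :: "(real \<times> 'm::euclidean_space) set" where
  "strip = {x. fst x \<in> {-1/2..1/2}}"

definition rkern :: "real \<Rightarrow> real \<times> 'm::euclidean_space \<Rightarrow> ennreal" where
  "rkern s z = ennreal (norm z powr (- (real DIM(real \<times> 'm) + s)))"

definition perK :: "real \<Rightarrow> real \<times> 'm::euclidean_space \<Rightarrow> ennreal" where
  "perK s z = (\<Sum>\<^sub>\<infinity>k\<in>(UNIV::int set). rkern s (z + of_int k *\<^sub>R e1))"

definition frac_per :: "real \<Rightarrow> (real \<times> 'm::euclidean_space) set \<Rightarrow> ennreal" where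
  "frac_per s F = (\<integral>\<^sup>+ y. \<integral>\<^sup>+ x. indicator F y * indicator (- F) x * rkern s (x - y) \<partial>lebesgue \<partial>lebesgue)"

definition P_S :: "real \<Rightarrow> (real \<times> 'm::euclidean_space) set \<Rightarrow> ennreal" where
  "P_S s E = (\<integral>\<^sup>+ y. \<integral>\<^sup>+ x. indicator (E \<inter> strip) y * indicator (strip - E) x * perK s (x - y)
      \<partial>lebesgue \<partial>lebesgue)"

definition Pi_S :: "real \<Rightarrow> (real \<times> 'm::euclidean_space) set \<Rightarrow> ennreal" where
  "Pi_S s F = (let Ft = F \<inter> {x. fst x \<in> {1/4..1/2}};
                   Fh = ((\<lambda>p. p + e1) ` F) \<inter> {x. fst x \<in> {1/2..3/4}}
               in \<integral>\<^sup>+ y. \<integral>\<^sup>+ x. indicator Ft y * indicator Fh x * rkern s (x - y) \<partial>lebesgue \<partial>lebesgue)"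

end

theory Submission
  imports Defs
begin
lemma sigma_finite_lebesgue: "sigma_finite_measure (lebesgue :: 'a::euclidean_space measure)"
proof
  show "\<exists>A::'a set set. countable A \<and> A \<subseteq> sets lebesgue \<and> \<Union>A = space lebesgue \<and> (\<forall>a\<in>A. emeasure lebesgue a \<noteq> \<infinity>)"
    by (intro exI[of _ "range (\<lambda>n::nat. box (- real n *\<^sub>R One) (real n *\<^sub>R One))"])
       (auto simp: emeasure_lborel_box_eq UN_box_eq_UNIV)
qed

lemma rkern_meas[measurable]: "rkern s \<in> borel_measurable borel"
  unfolding rkern_def by measurable

lemma lebesgue_transl:
  fixes t :: "'a::euclidean_space"
  shows "lebesgue = distr lebesgue lebesgue (\<lambda>x. t + x)" and "(\<lambda>x. t + x) \<in> lebesgue \<rightarrow>\<^sub>M lebesgue"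
proof -
  have e: "(\<lambda>x. t + (\<Sum>j\<in>Basis. (1 * (x \<bullet> j)) *\<^sub>R j)) = (\<lambda>x. t + x)"
    by (simp add: euclidean_representation)
  show "lebesgue = distr lebesgue lebesgue (\<lambda>x. t + x)"
    using lebesgue_affine_euclidean[of "\<lambda>_. 1" t] unfolding e by (simp add: density_1)
  show "(\<lambda>x. t + x) \<in> lebesgue \<rightarrow>\<^sub>M lebesgue"
    using lebesgue_affine_measurable[of "\<lambda>_. 1" t] unfolding e by simp
qed

lemma nn_integral_transl:
  fixes t :: "'a::euclidean_space"
  assumes "f \<in> borel_measurable lebesgue"
  shows "(\<integral>\<^sup>+x. f (t + x) \<partial>lebesgue) = (\<integral>\<^sup>+x. f x \<partial>lebesgue)"
proof -
  have "(\<integral>\<^sup>+x. f x \<partial>lebesgue) = (\<integral>\<^sup>+x. f x \<partial>distr lebesgue lebesgue (\<lambda>x. t + x))"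
    using lebesgue_transl(1)[of t] by simp
  also have "\<dots> = (\<integral>\<^sup>+x. f (t + x) \<partial>lebesgue)"
    using lebesgue_transl(2)[of t] assms by (subst nn_integral_distr) auto
  finally show ?thesis by simp
qed

lemma leb_id_meas: "(\<lambda>x::'a::euclidean_space. x) \<in> lebesgue \<rightarrow>\<^sub>M borel"
  by (rule measurable_completion) simp

lemma fst_leb[measurable]: "fst \<in> (lebesgue \<Otimes>\<^sub>M (M::'b measure)) \<rightarrow>\<^sub>M (borel :: 'a::euclidean_space measure)"
  by (rule measurable_compose[OF measurable_fst leb_id_meas])
lemma snd_leb[measurable]: "snd \<in> ((M::'b measure) \<Otimes>\<^sub>M lebesgue) \<rightarrow>\<^sub>M (borel :: 'a::euclidean_space measure)"
  by (rule measurable_compose[OF measurable_snd leb_id_meas])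

lemma meas_prod[measurable]:
  fixes A B :: "(real \<times> 'm::euclidean_space) set"
  assumes [measurable]: "A \<in> sets lebesgue" "B \<in> sets lebesgue"
  shows "(\<lambda>(y,x). indicator A y * indicator B x * rkern s (x - y + v)) \<in> borel_measurable (lebesgue \<Otimes>\<^sub>M lebesgue)"
  by measurable
lemma infsum_nat_ennreal: "infsum (f::nat\<Rightarrow>ennreal) UNIV = suminf f"
proof -
  have "infsum f UNIV = (SUP F\<in>{F. finite F \<and> F\<subseteq>UNIV}. sum f F)"
    by (rule nonneg_infsum_complete) simp
  also have "\<dots> = (SUP n. sum f {..<n})"
  proof (rule antisym)
    show "(SUP F\<in>{F. finite F \<and> F\<subseteq>UNIV}. sum f F) \<le> (SUP n. sum f {..<n})"
    proof (rule SUP_least)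
      fix F :: "nat set" assume "F \<in> {F. finite F \<and> F\<subseteq>UNIV}"
      then have fin: "finite F" by auto
      then obtain n where "F \<subseteq> {..<n}"
        by (meson finite_nat_bounded)
      then have "sum f F \<le> sum f {..<n}" by (intro sum_mono2) auto
      also have "\<dots> \<le> (SUP n. sum f {..<n})" by (rule SUP_upper) auto
      finally show "sum f F \<le> (SUP n. sum f {..<n})" .
    qed
    show "(SUP n. sum f {..<n}) \<le> (SUP F\<in>{F. finite F \<and> F\<subseteq>UNIV}. sum f F)"
      by (rule SUP_least, rule SUP_upper) auto
  qed
  also have "\<dots> = suminf f" by (simp add: suminf_eq_SUP)
  finally show ?thesis .
qed

lemma infsum_int_nz: "infsum (f::int\<Rightarrow>ennreal) (UNIV - {0}) = (\<Sum>m. f (int (Suc m))) + (\<Sum>m. f (- int (Suc m)))"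
proof -
  let ?P = "range (\<lambda>m::nat. int (Suc m))" and ?N = "range (\<lambda>m::nat. - int (Suc m))"
  have U0: "x \<in> ?P \<union> ?N" if "x \<noteq> 0" for x :: int
  proof (cases "x \<in> ?N")
    case False
    note xx = False
    have "x > 0"
    proof (rule ccontr)
      assume "\<not> x > 0"
      with that have "x < 0" by auto
      then have "x = - int (Suc (nat (- x - 1)))" by simp
      with xx show False by blast
    qed
    then have "x = int (Suc (nat (x - 1)))" by simp
    then show ?thesis by blast
  qed auto
  have U: "UNIV - {0} = ?P \<union> ?N" using U0 by auto
  have D: "?P \<inter> ?N = {}" by auto
  have "infsum f (UNIV - {0}) = infsum f ?P + infsum f ?N"
    unfolding U by (rule infsum_Un_disjoint) (auto intro: nonneg_summable_on_complete simp: D)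
  also have "infsum f ?P = infsum (f \<circ> (\<lambda>m::nat. int (Suc m))) UNIV"
    by (rule infsum_reindex) (auto simp: inj_on_def)
  also have "infsum f ?N = infsum (f \<circ> (\<lambda>m::nat. - int (Suc m))) UNIV"
    by (rule infsum_reindex) (auto simp: inj_on_def)
  finally show ?thesis by (simp add: infsum_nat_ennreal comp_def)
qed

lemma infsum_int_all: "infsum (f::int\<Rightarrow>ennreal) UNIV = f 0 + infsum f (UNIV - {0})"
proof -
  have "infsum f UNIV = infsum f ({0} \<union> (UNIV - {0}))" by (simp add: insert_UNIV)
  also have "\<dots> = infsum f {0} + infsum f (UNIV - {0})"
    by (rule infsum_Un_disjoint) (auto intro: nonneg_summable_on_complete)
  finally show ?thesis by simp
qed

lemma nn_integral_infsum_nz: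
  fixes g :: "int \<Rightarrow> 'b \<Rightarrow> ennreal"
  assumes [measurable]: "\<And>k. g k \<in> borel_measurable M"
  shows "(\<integral>\<^sup>+x. (\<Sum>\<^sub>\<infinity>k\<in>UNIV - {0}. g k x) \<partial>M) = (\<Sum>\<^sub>\<infinity>k\<in>UNIV - {0}. \<integral>\<^sup>+x. g k x \<partial>M)"
proof -
  have "(\<integral>\<^sup>+x. (\<Sum>\<^sub>\<infinity>k\<in>UNIV - {0}. g k x) \<partial>M) =
     (\<integral>\<^sup>+x. (\<Sum>m. g (int (Suc m)) x) + (\<Sum>m. g (- int (Suc m)) x) \<partial>M)"
    by (simp add: infsum_int_nz)
  also have "\<dots> = (\<integral>\<^sup>+x. (\<Sum>m. g (int (Suc m)) x) \<partial>M) + (\<integral>\<^sup>+x. (\<Sum>m. g (- int (Suc m)) x) \<partial>M)"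
    by (rule nn_integral_add) measurable
  also have "\<dots> = (\<Sum>m. \<integral>\<^sup>+x. g (int (Suc m)) x \<partial>M) + (\<Sum>m. \<integral>\<^sup>+x. g (- int (Suc m)) x \<partial>M)"
    by (simp add: nn_integral_suminf)
  also have "\<dots> = (\<Sum>\<^sub>\<infinity>k\<in>UNIV - {0}. \<integral>\<^sup>+x. g k x \<partial>M)"
    by (simp add: infsum_int_nz)
  finally show ?thesis .
qed

lemma nn_integral_infsum_all:
  fixes g :: "int \<Rightarrow> 'b \<Rightarrow> ennreal"
  assumes [measurable]: "\<And>k. g k \<in> borel_measurable M"
  shows "(\<integral>\<^sup>+x. (\<Sum>\<^sub>\<infinity>k\<in>UNIV. g k x) \<partial>M) = (\<Sum>\<^sub>\<infinity>k\<in>UNIV. \<integral>\<^sup>+x. g k x \<partial>M)"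
proof -
  have "(\<integral>\<^sup>+x. (\<Sum>\<^sub>\<infinity>k\<in>UNIV. g k x) \<partial>M) = (\<integral>\<^sup>+x. g 0 x + (\<Sum>\<^sub>\<infinity>k\<in>UNIV - {0}. g k x) \<partial>M)"
    by (simp add: infsum_int_all[where f="\<lambda>k. g k _"])
  also have "\<dots> = (\<integral>\<^sup>+x. g 0 x \<partial>M) + (\<integral>\<^sup>+x. (\<Sum>\<^sub>\<infinity>k\<in>UNIV - {0}. g k x) \<partial>M)"
    by (rule nn_integral_add) (auto simp: infsum_int_nz)
  also have "\<dots> = (\<Sum>\<^sub>\<infinity>k\<in>UNIV. \<integral>\<^sup>+x. g k x \<partial>M)"
    by (simp add: nn_integral_infsum_nz infsum_int_all[where f="\<lambda>k. \<integral>\<^sup>+x. g k x \<partial>M"])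
  finally show ?thesis .
qed

interpretation leb: sigma_finite_measure "lebesgue :: 'a::euclidean_space measure"
  by (rule sigma_finite_lebesgue)

lemma leb_from_borel: "f \<in> borel \<rightarrow>\<^sub>M N \<Longrightarrow> f \<in> lebesgue \<rightarrow>\<^sub>M N"
  by (rule measurable_completion) simp

lemma rk_leb[measurable]: "(\<lambda>x. rkern s (x - y + v)) \<in> borel_measurable lebesgue"
  by (rule leb_from_borel) measurable
lemma rk_leb0[measurable]: "(\<lambda>x. rkern s (x - y)) \<in> borel_measurable lebesgue"
  by (rule leb_from_borel) measurable

lemma meas_prod0[measurable]:
  fixes A B :: "(real \<times> 'm::euclidean_space) set"
  assumes [measurable]: "A \<in> sets lebesgue" "B \<in> sets lebesgue"
  shows "(\<lambda>(y,x). indicator A y * indicator B x * rkern s (x - y)) \<in> borel_measurable (lebesgue \<Otimes>\<^sub>M lebesgue)"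
  by measurable

lemma outer_meas[measurable]:
  fixes A B :: "(real \<times> 'm::euclidean_space) set"
  assumes [measurable]: "A \<in> sets lebesgue" "B \<in> sets lebesgue"
  shows "(\<lambda>y. \<integral>\<^sup>+x. indicator A y * indicator B x * rkern s (x - y + v) \<partial>lebesgue) \<in> borel_measurable lebesgue"
  using leb.borel_measurable_nn_integral[OF meas_prod[OF assms, of s v]] by simp

lemma outer_meas0[measurable]:
  fixes A B :: "(real \<times> 'm::euclidean_space) set"
  assumes [measurable]: "A \<in> sets lebesgue" "B \<in> sets lebesgue"
  shows "(\<lambda>y. \<integral>\<^sup>+x. indicator A y * indicator B x * rkern s (x - y) \<partial>lebesgue) \<in> borel_measurable lebesgue"
  using leb.borel_measurable_nn_integral[OF meas_prod0[OF assms, of s]] by simp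

lemma infsum_int_cmult: "(\<Sum>\<^sub>\<infinity>(k::int)\<in>UNIV. c * f k) = c * (\<Sum>\<^sub>\<infinity>k\<in>UNIV. (f k::ennreal))"
  by (simp add: infsum_int_all infsum_int_nz distrib_left)

lemma infsum_int_add: "(\<Sum>\<^sub>\<infinity>k\<in>A. f k + g k) = (\<Sum>\<^sub>\<infinity>k\<in>A. (f k::ennreal)) + (\<Sum>\<^sub>\<infinity>k\<in>A. g k)"
  by (rule infsum_add) (auto intro: nonneg_summable_on_complete)

lemma infsum_single_ennreal: "(\<Sum>\<^sub>\<infinity>k\<in>A. (if k = k0 then c else (0::ennreal))) = (if k0 \<in> A then c else 0)"
proof -
  have "(\<Sum>\<^sub>\<infinity>k\<in>A. (if k = k0 then c else (0::ennreal))) = (\<Sum>\<^sub>\<infinity>k\<in>A \<inter> {k0}. (if k = k0 then c else (0::ennreal)))"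
    by (rule infsum_cong_neutral) auto
  also have "\<dots> = (if k0 \<in> A then c else 0)"
    by (cases "k0 \<in> A") auto
  finally show ?thesis .
qed

lemma inner_transl:
  fixes g :: "'a::euclidean_space \<Rightarrow> ennreal"
  assumes "g \<in> borel_measurable lebesgue"
  shows "(\<integral>\<^sup>+x. g (x + v) \<partial>lebesgue) = (\<integral>\<^sup>+x. g x \<partial>lebesgue)"
  using nn_integral_transl[OF assms, of v] by (simp add: add.commute)

definition II :: "real \<Rightarrow> (real \<times> 'm::euclidean_space) set \<Rightarrow> (real \<times> 'm) set \<Rightarrow> (real \<times> 'm) \<Rightarrow> ennreal" where
  "II s A B w = (\<integral>\<^sup>+y. \<integral>\<^sup>+x. indicator A y * indicator B x * rkern s (x - y + w) \<partial>lebesgue \<partial>lebesgue)"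

lemma II_split:
  fixes A B C :: "(real \<times> 'm::euclidean_space) set"
  assumes [measurable]: "A \<in> sets lebesgue" "B \<in> sets lebesgue" "C \<in> sets lebesgue" and "B \<subseteq> C"
  shows "II s A (C - B) w + II s A B w = II s A C w"
proof -
  have "II s A (C - B) w + II s A B w = (\<integral>\<^sup>+y. (\<integral>\<^sup>+x. indicator A y * indicator (C - B) x * rkern s (x - y + w) \<partial>lebesgue) + (\<integral>\<^sup>+x. indicator A y * indicator B x * rkern s (x - y + w) \<partial>lebesgue) \<partial>lebesgue)"
    unfolding II_def by (rule nn_integral_add[symmetric]) measurable
  also have "\<dots> = (\<integral>\<^sup>+y. (\<integral>\<^sup>+x. indicator A y * indicator (C - B) x * rkern s (x - y + w) + indicator A y * indicator B x * rkern s (x - y + w) \<partial>lebesgue) \<partial>lebesgue)"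
    by (intro nn_integral_cong nn_integral_add[symmetric]) measurable
  also have "\<dots> = II s A C w"
    unfolding II_def
    by (intro nn_integral_cong) (use assms(4) in \<open>auto simp: indicator_def distrib_right[symmetric]\<close>)
  finally show ?thesis .
qed

lemma slab_meas[measurable]: "{x::real\<times>'m::euclidean_space. fst x \<in> {a..b}} \<in> sets lebesgue"
proof -
  have e: "{x::real\<times>'m::euclidean_space. fst x \<in> {a..b}} = {x. a \<le> fst x} \<inter> {x. fst x \<le> b}" by auto
  have "closed {x::real\<times>'m::euclidean_space. fst x \<in> {a..b}}"
    unfolding e by (intro closed_Int closed_Collect_le continuous_intros)
  then show ?thesis by simp
qed

lemma strip_meas[measurable]: "(strip :: (real\<times>'m::euclidean_space) set) \<in> sets lebesgue"
  unfolding strip_def by (rule slab_meas)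

lemma hyper_null: "{x::real\<times>'m::euclidean_space. fst x = c} \<in> null_sets lebesgue"
proof -
  have "negligible {x::real\<times>'m. (1, 0) \<bullet> x = c}"
    by (rule negligible_hyperplane) (simp add: zero_prod_def)
  moreover have "{x::real\<times>'m. (1, 0) \<bullet> x = c} = {x. fst x = c}"
    by (auto simp: inner_Pair_0)
  ultimately show ?thesis by (simp add: negligible_iff_null_sets)
qed

lemma AE_off_grid: "AE x in (lebesgue :: (real\<times>'m::euclidean_space) measure). \<forall>j::int. fst x \<noteq> of_int j + 1/2"
proof (rule AE_I')
  show "(\<Union>j::int. {x::real\<times>'m. fst x = of_int j + 1/2}) \<in> null_sets lebesgue"
    by (rule null_sets_UN') (auto intro: hyper_null)
qed auto

lemma grid_mem:
  fixes t :: real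
  assumes "\<forall>j::int. t \<noteq> of_int j + 1/2"
  shows "t \<in> {of_int k - 1/2 .. of_int k + 1/2} \<longleftrightarrow> k = \<lfloor>t + 1/2\<rfloor>"
proof -
  have "t \<noteq> of_int k + 1/2" using assms by blast
  have "k = \<lfloor>t + 1/2\<rfloor> \<longleftrightarrow> of_int k \<le> t + 1/2 \<and> t + 1/2 < of_int k + 1"
    by (metis floor_eq_iff)
  then show ?thesis unfolding atLeastAtMost_iff using \<open>t \<noteq> of_int k + 1/2\<close> by linarith
qed

lemma part1:
  fixes F :: "(real \<times> 'm::euclidean_space) set"
  assumes Fm[measurable]: "F \<in> sets lebesgue" and FS: "F \<subseteq> strip"
  shows "frac_per s F = P_S s F + (\<Sum>\<^sub>\<infinity>k\<in>(UNIV::int set) - {0}. II s F F (of_int k *\<^sub>R e1))"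
proof -
  define v :: "int \<Rightarrow> real \<times> 'm" where "v k = of_int k *\<^sub>R e1" for k
  define Sk :: "int \<Rightarrow> (real \<times> 'm) set" where "Sk k = {x. fst x \<in> {of_int k - 1/2 .. of_int k + 1/2}}" for k
  have Sk_meas[measurable]: "Sk k \<in> sets lebesgue" for k unfolding Sk_def by (rule slab_meas)
  have FiS: "F \<inter> strip = F" using FS by auto
  have a: "P_S s F = (\<Sum>\<^sub>\<infinity>k\<in>UNIV. II s F (strip - F) (v k))"
  proof -
    have "P_S s F = (\<integral>\<^sup>+ y. \<integral>\<^sup>+ x. (\<Sum>\<^sub>\<infinity>k\<in>UNIV. indicator F y * indicator (strip - F) x * rkern s (x - y + v k)) \<partial>lebesgue \<partial>lebesgue)"
      unfolding P_S_def perK_def FiS v_def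
      by (simp add: infsum_int_cmult)
    also have "\<dots> = (\<integral>\<^sup>+ y. (\<Sum>\<^sub>\<infinity>k\<in>UNIV. \<integral>\<^sup>+ x. indicator F y * indicator (strip - F) x * rkern s (x - y + v k) \<partial>lebesgue) \<partial>lebesgue)"
      by (intro nn_integral_cong nn_integral_infsum_all) measurable
    also have "\<dots> = (\<Sum>\<^sub>\<infinity>k\<in>UNIV. II s F (strip - F) (v k))"
      unfolding II_def by (intro nn_integral_infsum_all) measurable
    finally show ?thesis .
  qed
  have v0: "v 0 = 0" by (simp add: v_def)
  have c: "(\<Sum>\<^sub>\<infinity>k\<in>UNIV - {0}. II s F (strip - F) (v k)) + (\<Sum>\<^sub>\<infinity>k\<in>UNIV - {0}. II s F F (v k))
      = (\<Sum>\<^sub>\<infinity>k\<in>UNIV - {0}. II s F strip (v k))"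
    by (simp add: infsum_int_add[symmetric] II_split FS)
  have d: "II s F strip (v k) = (\<integral>\<^sup>+y. \<integral>\<^sup>+x. indicator F y * indicator (Sk k) x * rkern s (x - y) \<partial>lebesgue \<partial>lebesgue)" for k
    unfolding II_def
  proof (rule nn_integral_cong)
    fix y :: "real \<times> 'm"
    have "(\<integral>\<^sup>+x. indicator F y * indicator (Sk k) x * rkern s (x - y) \<partial>lebesgue)
        = (\<integral>\<^sup>+x. indicator F y * indicator (Sk k) (x + v k) * rkern s (x + v k - y) \<partial>lebesgue)"
      by (rule inner_transl[symmetric]) measurable
    also have "\<dots> = (\<integral>\<^sup>+x. indicator F y * indicator strip x * rkern s (x - y + v k) \<partial>lebesgue)"
    proof (intro nn_integral_cong)
      fix x :: "real \<times> 'm"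
      have h1: "indicator (Sk k) (x + v k) = (indicator strip x :: ennreal)"
        by (auto simp: indicator_def Sk_def strip_def v_def e1_def)
      have h2: "x + v k - y = x - y + v k" by (simp add: algebra_simps)
      show "indicator F y * indicator (Sk k) (x + v k) * rkern s (x + v k - y) = indicator F y * indicator strip x * rkern s (x - y + v k)"
        by (simp only: h1 h2)
    qed
    finally show "(\<integral>\<^sup>+x. indicator F y * indicator strip x * rkern s (x - y + v k) \<partial>lebesgue) =
       (\<integral>\<^sup>+x. indicator F y * indicator (Sk k) x * rkern s (x - y) \<partial>lebesgue)" by simp
  qed
  have e: "(\<Sum>\<^sub>\<infinity>k\<in>UNIV - {0}. II s F strip (v k)) = (\<integral>\<^sup>+y. \<integral>\<^sup>+x. indicator F y * indicator (- strip) x * rkern s (x - y) \<partial>lebesgue \<partial>lebesgue)"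
  proof -
    have pt: "(\<integral>\<^sup>+x. indicator F y * indicator (- strip) x * rkern s (x - y) \<partial>lebesgue)
       = (\<Sum>\<^sub>\<infinity>k\<in>UNIV - {0}. \<integral>\<^sup>+x. indicator F y * indicator (Sk k) x * rkern s (x - y) \<partial>lebesgue)" for y
    proof -
      have "(\<integral>\<^sup>+x. indicator F y * indicator (- strip) x * rkern s (x - y) \<partial>lebesgue)
         = (\<integral>\<^sup>+x. (\<Sum>\<^sub>\<infinity>k\<in>UNIV - {0}. indicator F y * indicator (Sk k) x * rkern s (x - y)) \<partial>lebesgue)"
      proof (rule nn_integral_cong_AE)
        show "AE x in lebesgue. indicator F y * indicator (- strip) x * rkern s (x - y) = (\<Sum>\<^sub>\<infinity>k\<in>UNIV - {0}. indicator F y * indicator (Sk k) x * rkern s (x - y))"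
          using AE_off_grid
        proof eventually_elim
          case (elim x)
          define k0 where "k0 = \<lfloor>fst x + 1/2\<rfloor>"
          have mem: "x \<in> Sk k \<longleftrightarrow> k = k0" for k
            unfolding Sk_def k0_def using grid_mem[OF elim] by simp
          have sm: "x \<in> strip \<longleftrightarrow> k0 = 0"
            using mem[of 0] by (simp add: Sk_def strip_def)
          have "(\<Sum>\<^sub>\<infinity>k\<in>UNIV - {0}. indicator F y * indicator (Sk k) x * rkern s (x - y))
              = (\<Sum>\<^sub>\<infinity>k\<in>UNIV - {0}. (if k = k0 then indicator F y * rkern s (x - y) else (0::ennreal)))"
            by (intro infsum_cong) (auto simp: indicator_def mem)
          also have "\<dots> = indicator F y * indicator (- strip) x * rkern s (x - y)"
            by (simp add: infsum_single_ennreal sm indicator_def)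
          finally show ?case by simp
        qed
      qed
      also have "\<dots> = (\<Sum>\<^sub>\<infinity>k\<in>UNIV - {0}. \<integral>\<^sup>+x. indicator F y * indicator (Sk k) x * rkern s (x - y) \<partial>lebesgue)"
        by (rule nn_integral_infsum_nz) measurable
      finally show ?thesis .
    qed
    have "(\<integral>\<^sup>+y. \<integral>\<^sup>+x. indicator F y * indicator (- strip) x * rkern s (x - y) \<partial>lebesgue \<partial>lebesgue)
       = (\<integral>\<^sup>+y. (\<Sum>\<^sub>\<infinity>k\<in>UNIV - {0}. \<integral>\<^sup>+x. indicator F y * indicator (Sk k) x * rkern s (x - y) \<partial>lebesgue) \<partial>lebesgue)"
      by (simp add: pt)
    also have "\<dots> = (\<Sum>\<^sub>\<infinity>k\<in>UNIV - {0}. \<integral>\<^sup>+y. \<integral>\<^sup>+x. indicator F y * indicator (Sk k) x * rkern s (x - y) \<partial>lebesgue \<partial>lebesgue)"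
      by (rule nn_integral_infsum_nz) measurable
    also have "\<dots> = (\<Sum>\<^sub>\<infinity>k\<in>UNIV - {0}. II s F strip (v k))"
      by (simp add: d)
    finally show ?thesis by simp
  qed
  have f: "II s F (strip - F) 0 + (\<integral>\<^sup>+y. \<integral>\<^sup>+x. indicator F y * indicator (- strip) x * rkern s (x - y) \<partial>lebesgue \<partial>lebesgue) = frac_per s F"
  proof -
    have "II s F (strip - F) 0 + (\<integral>\<^sup>+y. \<integral>\<^sup>+x. indicator F y * indicator (- strip) x * rkern s (x - y) \<partial>lebesgue \<partial>lebesgue)
      = (\<integral>\<^sup>+y. (\<integral>\<^sup>+x. indicator F y * indicator (strip - F) x * rkern s (x - y) \<partial>lebesgue) + (\<integral>\<^sup>+x. indicator F y * indicator (- strip) x * rkern s (x - y) \<partial>lebesgue) \<partial>lebesgue)"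
      unfolding II_def by simp (rule nn_integral_add[symmetric]; measurable)
    also have "\<dots> = (\<integral>\<^sup>+y. (\<integral>\<^sup>+x. indicator F y * indicator (strip - F) x * rkern s (x - y) + indicator F y * indicator (- strip) x * rkern s (x - y) \<partial>lebesgue) \<partial>lebesgue)"
      by (intro nn_integral_cong nn_integral_add[symmetric]) measurable
    also have "\<dots> = frac_per s F"
      unfolding frac_per_def
      by (intro nn_integral_cong) (use FS in \<open>auto simp: indicator_def distrib_right[symmetric]\<close>)
    finally show ?thesis .
  qed
  have "P_S s F + (\<Sum>\<^sub>\<infinity>k\<in>UNIV - {0}. II s F F (v k))
      = II s F (strip - F) 0 + ((\<Sum>\<^sub>\<infinity>k\<in>UNIV - {0}. II s F (strip - F) (v k)) + (\<Sum>\<^sub>\<infinity>k\<in>UNIV - {0}. II s F F (v k)))"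
    unfolding a by (subst infsum_int_all) (simp add: v0 add.assoc)
  also have "\<dots> = frac_per s F" unfolding c e f ..
  finally show ?thesis by (simp add: v_def)
qed

lemma rkern_le:
  assumes "0 < s" "0 < d" "d \<le> norm z"
  shows "rkern s (z :: real \<times> 'm::euclidean_space) \<le> ennreal (d powr - (real DIM(real \<times> 'm) + s))"
  unfolding rkern_def
  by (intro ennreal_leI powr_mono2') (use assms in auto)

lemma fst_le_norm: "\<bar>fst z\<bar> \<le> norm z"
  using norm_fst_le[of "fst z" "snd z"] by simp

lemma ennreal_split_head: "(\<Sum>m. f m) = f 0 + (\<Sum>m. f (Suc m) :: ennreal)"
proof -
  have "f sums ((\<Sum>m. f (Suc m)) + f 0)"
    by (rule sums_Suc) (rule summable_sums[OF summableI])
  then show ?thesis by (simp add: sums_unique[symmetric] add.commute)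
qed

lemma II_sq:
  fixes F :: "(real \<times> 'm::euclidean_space) set"
  assumes [measurable]: "F \<in> sets lebesgue"
  shows "(\<integral>\<^sup>+y. \<integral>\<^sup>+x. c * (indicator F y * indicator F x) \<partial>lebesgue \<partial>lebesgue) = c * (emeasure lebesgue F)\<^sup>2"
proof -
  have "(\<integral>\<^sup>+y. \<integral>\<^sup>+x. c * (indicator F y * indicator F x) \<partial>lebesgue \<partial>lebesgue)
      = (\<integral>\<^sup>+y. (c * emeasure lebesgue F) * indicator F y \<partial>lebesgue)"
  proof (rule nn_integral_cong)
    fix y
    have "(\<integral>\<^sup>+x. c * (indicator F y * indicator F x) \<partial>lebesgue) = (\<integral>\<^sup>+x. (c * indicator F y) * indicator F x \<partial>lebesgue)"
      by (simp add: ac_simps)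
    also have "\<dots> = (c * indicator F y) * emeasure lebesgue F"
      by (rule nn_integral_cmult_indicator) simp
    finally show "(\<integral>\<^sup>+x. c * (indicator F y * indicator F x) \<partial>lebesgue) = (c * emeasure lebesgue F) * indicator F y"
      by (simp add: ac_simps)
  qed
  also have "\<dots> = c * (emeasure lebesgue F)\<^sup>2"
    by (subst nn_integral_cmult_indicator) (simp_all add: power2_eq_square ac_simps)
  finally show ?thesis .
qed

lemma II_bound_const:
  fixes F :: "(real \<times> 'm::euclidean_space) set"
  assumes [measurable]: "F \<in> sets lebesgue"
    and b: "\<And>x y. x \<in> F \<Longrightarrow> y \<in> F \<Longrightarrow> rkern s (x - y + w) \<le> c"
  shows "II s F F w \<le> c * (emeasure lebesgue F)\<^sup>2"
proof -
  have "II s F F w \<le> (\<integral>\<^sup>+y. \<integral>\<^sup>+x. c * (indicator F y * indicator F x) \<partial>lebesgue \<partial>lebesgue)"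
    unfolding II_def
    by (intro nn_integral_mono) (auto simp: indicator_def b)
  then show ?thesis by (simp add: II_sq)
qed

lemma II_sym:
  fixes F :: "(real \<times> 'm::euclidean_space) set"
  assumes [measurable]: "F \<in> sets lebesgue"
  shows "II s F F (- w) = II s F F w"
proof -
  interpret lp: pair_sigma_finite "lebesgue :: (real \<times> 'm) measure" "lebesgue :: (real \<times> 'm) measure" ..
  have m: "case_prod (\<lambda>x y. indicator F y * indicator F x * rkern s (x - y + - w)) \<in> borel_measurable ((lebesgue :: (real \<times> 'm) measure) \<Otimes>\<^sub>M lebesgue)"
    by measurable
  have "II s F F (- w) = (\<integral>\<^sup>+x. \<integral>\<^sup>+y. indicator F y * indicator F x * rkern s (x - y + - w) \<partial>lebesgue \<partial>lebesgue)"
    unfolding II_def by (rule lp.Fubini'[OF m])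
  also have "\<dots> = II s F F w"
    unfolding II_def
  proof (rule nn_integral_cong, rule nn_integral_cong)
    fix x y :: "real \<times> 'm"
    have "rkern s (x - y + - w) = rkern s (y - x + w)"
      unfolding rkern_def by (metis add_uminus_conv_diff minus_diff_eq minus_add_distrib norm_minus_cancel)
    then show "indicator F y * indicator F x * rkern s (x - y + - w) = indicator F x * indicator F y * rkern s (y - x + w)"
      by (simp add: ac_simps)
  qed
  finally show ?thesis .
qed

lemma II_one:
  fixes F :: "(real \<times> 'm::euclidean_space) set"
  assumes Fm[measurable]: "F \<in> sets lebesgue" and FS: "F \<subseteq> strip" and s: "0 < s"
  shows "II s F F e1 \<le> Pi_S s F + ennreal ((1/4) powr - (real DIM(real \<times> 'm) + s)) * (emeasure lebesgue F)\<^sup>2"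
proof -
  define c where "c = ennreal ((1/4) powr - (real DIM(real \<times> 'm) + s))"
  define Ft where "Ft = F \<inter> {x::real \<times> 'm. fst x \<in> {1/4..1/2}}"
  define G where "G = F \<inter> {x::real \<times> 'm. fst x \<in> {-1/2..-1/4}}"
  define Fh where "Fh = ((\<lambda>p. p + e1) ` F) \<inter> {x::real \<times> 'm. fst x \<in> {1/2..3/4}}"
  have [measurable]: "Ft \<in> sets lebesgue" "G \<in> sets lebesgue" unfolding Ft_def G_def by measurable
  have "(\<lambda>p. e1 + p) ` F \<in> sets lebesgue" by (rule lebesgue_sets_translation) simp
  then have "(\<lambda>p. p + e1) ` F \<in> sets lebesgue" by (simp add: add.commute)
  then have [measurable]: "Fh \<in> sets lebesgue" unfolding Fh_def by (intro sets.Int slab_meas)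
  have e1fst: "fst (e1 :: real \<times> 'm) = 1" by (simp add: e1_def)
  have "II s F F e1 \<le> (\<integral>\<^sup>+y. \<integral>\<^sup>+x. indicator Ft y * indicator G x * rkern s (x - y + e1) + c * (indicator F y * indicator F x) \<partial>lebesgue \<partial>lebesgue)"
    unfolding II_def
  proof (intro nn_integral_mono)
    fix y x :: "real \<times> 'm"
    show "indicator F y * indicator F x * rkern s (x - y + e1) \<le> indicator Ft y * indicator G x * rkern s (x - y + e1) + c * (indicator F y * indicator F x)"
    proof (cases "x \<in> F \<and> y \<in> F")
      case False then show ?thesis by (auto simp: indicator_def)
    next
      case True
      then have xs: "fst x \<in> {-1/2..1/2}" and ys: "fst y \<in> {-1/2..1/2}" using FS by (auto simp: strip_def)
      show ?thesis
      proof (cases "y \<in> Ft \<and> x \<in> G")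
        case True then show ?thesis using \<open>x \<in> F \<and> y \<in> F\<close> by (simp add: indicator_def)
      next
        case False
        with \<open>x \<in> F \<and> y \<in> F\<close> have "fst y < 1/4 \<or> fst x > -1/4" using xs ys by (auto simp: Ft_def G_def)
        then have "1/4 \<le> \<bar>fst (x - y + e1)\<bar>" using xs ys by (auto simp: e1fst)
        then have "1/4 \<le> norm (x - y + e1)" using fst_le_norm[of "x - y + e1"] by linarith
        then have "rkern s (x - y + e1) \<le> c" unfolding c_def by (intro rkern_le[OF s]) auto
        then show ?thesis using \<open>x \<in> F \<and> y \<in> F\<close> by (simp add: indicator_def add_increasing)
      qed
    qed
  qed
  also have "\<dots> = (\<integral>\<^sup>+y. (\<integral>\<^sup>+x. indicator Ft y * indicator G x * rkern s (x - y + e1) \<partial>lebesgue) + (\<integral>\<^sup>+x. c * (indicator F y * indicator F x) \<partial>lebesgue) \<partial>lebesgue)"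
    by (intro nn_integral_cong nn_integral_add) measurable
  also have "\<dots> = II s Ft G e1 + (\<integral>\<^sup>+y. \<integral>\<^sup>+x. c * (indicator F y * indicator F x) \<partial>lebesgue \<partial>lebesgue)"
    unfolding II_def by (rule nn_integral_add) measurable
  also have "(\<integral>\<^sup>+y. \<integral>\<^sup>+x. c * (indicator F y * indicator F x) \<partial>lebesgue \<partial>lebesgue) = c * (emeasure lebesgue F)\<^sup>2"
    by (rule II_sq) simp
  also have "II s Ft G e1 = Pi_S s F"
    unfolding II_def Pi_S_def Let_def Ft_def[symmetric] Fh_def[symmetric]
  proof (rule nn_integral_cong)
    fix y :: "real \<times> 'm"
    have "(\<integral>\<^sup>+x. indicator Ft y * indicator Fh x * rkern s (x - y) \<partial>lebesgue)
        = (\<integral>\<^sup>+x. indicator Ft y * indicator Fh (x + e1) * rkern s (x + e1 - y) \<partial>lebesgue)"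
      by (rule inner_transl[symmetric]) measurable
    also have "\<dots> = (\<integral>\<^sup>+x. indicator Ft y * indicator G x * rkern s (x - y + e1) \<partial>lebesgue)"
    proof (rule nn_integral_cong)
      fix x :: "real \<times> 'm"
      have h1: "indicator Fh (x + e1) = (indicator G x :: ennreal)"
        by (auto simp: indicator_def Fh_def G_def e1fst)
      have h2: "x + e1 - y = x - y + e1" by (simp add: algebra_simps)
      show "indicator Ft y * indicator Fh (x + e1) * rkern s (x + e1 - y) = indicator Ft y * indicator G x * rkern s (x - y + e1)"
        by (simp only: h1 h2)
    qed
    finally show "(\<integral>\<^sup>+x. indicator Ft y * indicator G x * rkern s (x - y + e1) \<partial>lebesgue) =
       (\<integral>\<^sup>+x. indicator Ft y * indicator Fh x * rkern s (x - y) \<partial>lebesgue)" by simp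
  qed
  finally show ?thesis unfolding c_def .
qed

lemma II_far:
  fixes F :: "(real \<times> 'm::euclidean_space) set"
  assumes Fm[measurable]: "F \<in> sets lebesgue" and FS: "F \<subseteq> strip" and s: "0 < s"
    and k: "\<bar>k\<bar> = int (Suc (Suc m))"
  shows "II s F F (of_int k *\<^sub>R e1) \<le> ennreal (real (Suc m) powr - (real DIM(real \<times> 'm) + s)) * (emeasure lebesgue F)\<^sup>2"
proof (rule II_bound_const[OF Fm])
  fix x y assume "x \<in> F" "y \<in> F"
  then have xs: "fst x \<in> {-1/2..1/2}" and ys: "fst y \<in> {-1/2..1/2}" using FS by (auto simp: strip_def)
  have f: "fst (x - y + of_int k *\<^sub>R e1) = fst x - fst y + of_int k" by (simp add: e1_def)
  have "real (Suc m) \<le> \<bar>fst x - fst y + of_int k\<bar>"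
  proof (cases "k \<ge> 0")
    case True
    then have "of_int k = real (Suc (Suc m))" using k by (metis abs_of_nonneg of_int_of_nat_eq)
    then show ?thesis using xs ys by auto
  next
    case False
    then have "of_int k = - real (Suc (Suc m))" using k
      by (metis abs_of_neg linorder_not_le minus_minus of_int_minus of_int_of_nat_eq)
    then show ?thesis using xs ys by auto
  qed
  then have "real (Suc m) \<le> norm (x - y + of_int k *\<^sub>R e1)"
    using fst_le_norm[of "x - y + of_int k *\<^sub>R e1"] f by linarith
  then show "rkern s (x - y + of_int k *\<^sub>R e1) \<le> ennreal (real (Suc m) powr - (real DIM(real \<times> 'm) + s))"
    by (intro rkern_le[OF s]) auto
qed

lemma Z_summable:
  assumes "0 < s"
  shows "summable (\<lambda>m. real (Suc m) powr - (real DIM(real \<times> 'm::euclidean_space) + s))"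
proof -
  have "real DIM(real \<times> 'm) \<ge> 2" using DIM_positive[where 'a='m] by simp
  then have "summable (\<lambda>n. of_nat n powr - (real DIM(real \<times> 'm) + s) :: real)"
    using assms by (subst summable_real_powr_iff) simp
  then show ?thesis by (subst summable_Suc_iff)
qed

lemma sum_bound:
  fixes F :: "(real \<times> 'm::euclidean_space) set"
  assumes Fm[measurable]: "F \<in> sets lebesgue" and FS: "F \<subseteq> strip" and s: "0 < s"
  shows "(\<Sum>\<^sub>\<infinity>k\<in>(UNIV::int set) - {0}. II s F F (of_int k *\<^sub>R e1)) \<le>
     (Pi_S s F + ennreal ((1/4) powr - (real DIM(real \<times> 'm) + s)) * (emeasure lebesgue F)\<^sup>2
        + ennreal (\<Sum>m. real (Suc m) powr - (real DIM(real \<times> 'm) + s)) * (emeasure lebesgue F)\<^sup>2)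
   + (Pi_S s F + ennreal ((1/4) powr - (real DIM(real \<times> 'm) + s)) * (emeasure lebesgue F)\<^sup>2
        + ennreal (\<Sum>m. real (Suc m) powr - (real DIM(real \<times> 'm) + s)) * (emeasure lebesgue F)\<^sup>2)"
proof -
  define f where "f k = II s F F (of_int k *\<^sub>R e1)" for k
  define b where "b m = real (Suc m) powr - (real DIM(real \<times> 'm) + s)" for m
  define \<mu> where "\<mu> = (emeasure lebesgue F)\<^sup>2"
  have tail: "(\<Sum>m. f (g (Suc m))) \<le> ennreal (\<Sum>m. b m) * \<mu>" if g: "\<And>m. \<bar>g m\<bar> = int (Suc m)" for g :: "nat \<Rightarrow> int"
  proof -
    have t: "f (g (Suc m)) \<le> \<mu> * ennreal (b m)" for m
      unfolding f_def b_def \<mu>_def using II_far[OF Fm FS s g[of "Suc m"]] by (simp only: mult.commute)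
    have "(\<Sum>m. f (g (Suc m))) \<le> (\<Sum>m. \<mu> * ennreal (b m))"
      by (intro suminf_le summableI t)
    also have "\<dots> = \<mu> * ennreal (\<Sum>m. b m)"
    proof -
      have "(\<Sum>m. ennreal (b m)) = ennreal (\<Sum>m. b m)"
      proof (rule suminf_ennreal2)
        show "0 \<le> b i" for i by (simp add: b_def)
        show "summable b" unfolding b_def by (rule Z_summable[OF s])
      qed
      then show ?thesis by simp
    qed
    finally show ?thesis by (simp add: mult.commute)
  qed
  have one: "II s F F e1 \<le> Pi_S s F + ennreal ((1/4) powr - (real DIM(real \<times> 'm) + s)) * \<mu>"
    unfolding \<mu>_def by (rule II_one[OF Fm FS s])
  have pos: "(\<Sum>m. f (int (Suc m))) \<le> Pi_S s F + ennreal ((1/4) powr - (real DIM(real \<times> 'm) + s)) * \<mu> + ennreal (\<Sum>m. b m) * \<mu>"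
  proof -
    have "(\<Sum>m. f (int (Suc m))) = f 1 + (\<Sum>m. f (int (Suc (Suc m))))"
      by (subst ennreal_split_head) simp
    also have "\<dots> \<le> (Pi_S s F + ennreal ((1/4) powr - (real DIM(real \<times> 'm) + s)) * \<mu>) + ennreal (\<Sum>m. b m) * \<mu>"
      by (intro add_mono tail[of "\<lambda>m. int (Suc m)"]) (use one in \<open>simp_all add: f_def\<close>)
    finally show ?thesis .
  qed
  have neg: "(\<Sum>m. f (- int (Suc m))) \<le> Pi_S s F + ennreal ((1/4) powr - (real DIM(real \<times> 'm) + s)) * \<mu> + ennreal (\<Sum>m. b m) * \<mu>"
  proof -
    have "(\<Sum>m. f (- int (Suc m))) = f (-1) + (\<Sum>m. f (- int (Suc (Suc m))))"
      by (subst ennreal_split_head) simp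
    also have "f (-1) = II s F F e1"
      unfolding f_def using II_sym[OF Fm, of s e1] by simp
    also have "\<dots> + (\<Sum>m. f (- int (Suc (Suc m)))) \<le> (Pi_S s F + ennreal ((1/4) powr - (real DIM(real \<times> 'm) + s)) * \<mu>) + ennreal (\<Sum>m. b m) * \<mu>"
      by (intro add_mono tail[of "\<lambda>m. - int (Suc m)"] one) simp
    finally show ?thesis .
  qed
  have "(\<Sum>\<^sub>\<infinity>k\<in>(UNIV::int set) - {0}. f k) \<le> (Pi_S s F + ennreal ((1/4) powr - (real DIM(real \<times> 'm) + s)) * \<mu> + ennreal (\<Sum>m. b m) * \<mu>) + (Pi_S s F + ennreal ((1/4) powr - (real DIM(real \<times> 'm) + s)) * \<mu> + ennreal (\<Sum>m. b m) * \<mu>)"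
    unfolding infsum_int_nz by (rule add_mono[OF pos neg])
  then show ?thesis unfolding f_def b_def \<mu>_def .
qed
lemma fin_ineq:
  fixes P M :: ennreal assumes a: "0 \<le> a" and b: "0 \<le> b"
  shows "(P + ennreal a * M + ennreal b * M) + (P + ennreal a * M + ennreal b * M) \<le> ennreal (2 * (1 + a + b)) * (M + P)"
proof -
  have e: "ennreal (2 * (1 + a + b)) = 2 * (1 + ennreal a + ennreal b)"
    using a b by (simp add: ennreal_mult' ennreal_plus)
  have "ennreal (2 * (1 + a + b)) * (M + P) = ((P + ennreal a * M + ennreal b * M) + (P + ennreal a * M + ennreal b * M)) + (2 * M + 2 * ennreal a * P + 2 * ennreal b * P)"
    unfolding e by (simp only: distrib_left distrib_right mult_2 mult_2_right mult_1 mult_1_right ac_simps)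
  then show ?thesis by (metis le_iff_add)
qed

theorem proposition3p1:
  fixes s :: real
  assumes "0 < s" and "s < 1"
  shows "(\<forall>F :: (real \<times> 'm::euclidean_space) set.
            F \<in> sets lebesgue \<and> F \<subseteq> strip \<longrightarrow>
              P_S s F \<le> frac_per s F \<and>
              frac_per s F = P_S s F +
                (\<Sum>\<^sub>\<infinity>k\<in>(UNIV::int set) - {0}.
                   \<integral>\<^sup>+ y. \<integral>\<^sup>+ x. indicator F y * indicator F x * rkern s (x - y + of_int k *\<^sub>R e1)
                     \<partial>lebesgue \<partial>lebesgue))
       \<and> (\<exists>C :: real. C > 0 \<and>
            (\<forall>F :: (real \<times> 'm) set. F \<in> sets lebesgue \<and> F \<subseteq> strip \<longrightarrow>
               frac_per s F \<le> P_S s F + ennreal C * ((emeasure lebesgue F)\<^sup>2 + Pi_S s F)))"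
proof (intro conjI allI impI)
  fix F :: "(real \<times> 'm) set"
  assume "F \<in> sets lebesgue \<and> F \<subseteq> strip"
  then have eq: "frac_per s F = P_S s F + (\<Sum>\<^sub>\<infinity>k\<in>(UNIV::int set) - {0}. II s F F (of_int k *\<^sub>R e1))"
    by (intro part1) auto
  show "frac_per s F = P_S s F +
                (\<Sum>\<^sub>\<infinity>k\<in>(UNIV::int set) - {0}.
                   \<integral>\<^sup>+ y. \<integral>\<^sup>+ x. indicator F y * indicator F x * rkern s (x - y + of_int k *\<^sub>R e1)
                     \<partial>lebesgue \<partial>lebesgue)"
    using eq unfolding II_def .
  show "P_S s F \<le> frac_per s F" using eq le_iff_add by blast
next
  define c' where "c' = (1/4::real) powr - (real DIM(real \<times> 'm) + s)"
  define Z where "Z = (\<Sum>m. real (Suc m) powr - (real DIM(real \<times> 'm) + s))"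
  have c'0: "0 \<le> c'" by (simp add: c'_def)
  have Z0: "0 \<le> Z" unfolding Z_def by (intro suminf_nonneg Z_summable[OF assms(1)]) simp
  show "\<exists>C :: real. C > 0 \<and>
            (\<forall>F :: (real \<times> 'm) set. F \<in> sets lebesgue \<and> F \<subseteq> strip \<longrightarrow>
               frac_per s F \<le> P_S s F + ennreal C * ((emeasure lebesgue F)\<^sup>2 + Pi_S s F))"
  proof (intro exI[of _ "2 * (1 + c' + Z)"] conjI allI impI)
    show "0 < 2 * (1 + c' + Z)" using c'0 Z0 by simp
    fix F :: "(real \<times> 'm) set"
    assume FF: "F \<in> sets lebesgue \<and> F \<subseteq> strip"
    then have eq: "frac_per s F = P_S s F + (\<Sum>\<^sub>\<infinity>k\<in>(UNIV::int set) - {0}. II s F F (of_int k *\<^sub>R e1))"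
      by (intro part1) auto
    have sb: "(\<Sum>\<^sub>\<infinity>k\<in>(UNIV::int set) - {0}. II s F F (of_int k *\<^sub>R e1)) \<le>
      (Pi_S s F + ennreal c' * (emeasure lebesgue F)\<^sup>2 + ennreal Z * (emeasure lebesgue F)\<^sup>2)
      + (Pi_S s F + ennreal c' * (emeasure lebesgue F)\<^sup>2 + ennreal Z * (emeasure lebesgue F)\<^sup>2)"
      unfolding c'_def Z_def using FF by (intro sum_bound assms(1)) auto
    also have "\<dots> \<le> ennreal (2 * (1 + c' + Z)) * ((emeasure lebesgue F)\<^sup>2 + Pi_S s F)"
      by (rule fin_ineq[OF c'0 Z0])
    finally show "frac_per s F \<le> P_S s F + ennreal (2 * (1 + c' + Z)) * ((emeasure lebesgue F)\<^sup>2 + Pi_S s F)"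
      unfolding eq by (rule add_left_mono)
  qed
qed
end
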